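(* Fix positive integers $m,n$ and $\alpha\in[0,1]$. Among all approval elections with $m$ candidates, $n$ voters, and saturation $\alpha$, an election $E$ has the largest value of $\mathrm{chd}(E)$ if and only if (a) all candidates are approved in some vote in $\mathrm{cen}(E)$, or (b) all candidates are disapproved in some vote in $\mathrm{cen}(E)$, or (c) for each candidate $c_j$, $|A(c_j)|\in\{\lfloor n/2\rfloor,\lceil n/2\rceil\}$.
   Context: An (approval) election is $E=(C,V)$ with $C=\{c_1,\dots,c_m\}$ and voters $V=(v_1,\dots,v_n)$, each vote a binary vector in $\{0,1\}^m$; $A(c)$ is the set of voters approving $c$, $A(v)$ the set of candidates approved by $v$. Saturation is $\mathrm{satr}(E)=\frac{1}{nm}\sum_{v\in V}|A(v)|$. $\mathrm{ham}(u,v)=\sum_j|u[j]-v[j]|$. A vote $u$ is central for $E$ if for each candidate $c_j$, $u[j]=v_i[j]$ for at least half of the voters $v_i$; $\mathrm{cen}(E)$ is the set of central votes. The central Hamming distance is $\mathrm{chd}(E)=\sum_{v_i\in V}\mathrm{ham}(v_i,u)$ for any $u\in\mathrm{cen}(E)$ (independent of the choice of $u$). *)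

theory Defs
  imports Complex_Main
begin

(* An approval election with m candidates c_0..c_{m-1} and n voters v_0..v_{n-1}
   is represented by V :: nat => nat => bool, where V i j  means voter i approves
   candidate j.  Only indices i < n, j < m are meaningful. *)

type_synonym election = "nat \<Rightarrow> nat \<Rightarrow> bool"

definition approvers :: "nat \<Rightarrow> election \<Rightarrow> nat \<Rightarrow> nat set" where
  "approvers n V j = {i. i < n \<and> V i j}"

definition approved :: "nat \<Rightarrow> election \<Rightarrow> nat \<Rightarrow> nat set" where
  "approved m V i = {j. j < m \<and> V i j}"

definition satr :: "nat \<Rightarrow> nat \<Rightarrow> election \<Rightarrow> real" where
  "satr m n V = (\<Sum>i<n. real (card (approved m V i))) / (real n * real m)"

definition ham :: "nat \<Rightarrow> (nat \<Rightarrow> bool) \<Rightarrow> (nat \<Rightarrow> bool) \<Rightarrow> nat" where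
  "ham m u v = card {j. j < m \<and> u j \<noteq> v j}"

definition central :: "nat \<Rightarrow> nat \<Rightarrow> election \<Rightarrow> (nat \<Rightarrow> bool) \<Rightarrow> bool" where
  "central m n V u \<longleftrightarrow> (\<forall>j<m. 2 * card {i. i < n \<and> V i j = u j} \<ge> n)"

definition cen :: "nat \<Rightarrow> nat \<Rightarrow> election \<Rightarrow> (nat \<Rightarrow> bool) set" where
  "cen m n V = {u. central m n V u}"

definition chd :: "nat \<Rightarrow> nat \<Rightarrow> election \<Rightarrow> nat" where
  "chd m n V = (\<Sum>i<n. ham m (V i) (SOME u. u \<in> cen m n V))"

end

theory Submission
  imports Defs
begin

lemma card_count: "card {j::nat. j < m \<and> P j} = (\<Sum>j<m. if P j then 1 else 0::nat)"
proof -
  have "card {j. j < m \<and> P j} = (\<Sum>j\<in>{j\<in>{..<m}. P j}. 1::nat)" by simp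
  also have "\<dots> = (\<Sum>j<m. if P j then 1 else 0::nat)" by (rule sum.inter_filter) simp
  finally show ?thesis .
qed

lemma count_compl: "(\<Sum>j<m. if \<not> P j then 1 else 0::nat) = m - (\<Sum>j<m. if P j then 1 else 0::nat)"
proof -
  have "(\<Sum>j<m. if \<not> P j then 1 else 0::nat) + (\<Sum>j<m. if P j then 1 else 0::nat) = m"
    by (simp add: sum.distrib[symmetric] if_distrib cong: if_cong)
  then show ?thesis by linarith
qed

lemma card_approvers: "card (approvers n V j) = (\<Sum>i<n. if V i j then 1 else 0::nat)"
  unfolding approvers_def by (rule card_count)

lemma approvers_le: "card (approvers n V j) \<le> n"
proof -
  have "approvers n V j \<subseteq> {..<n}" unfolding approvers_def by auto
  then show ?thesis using card_mono[of "{..<n}"] by fastforce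
qed

lemma card_nonapprovers: "card {i. i < n \<and> \<not> V i j} = n - card (approvers n V j)"
  by (simp add: card_count card_approvers count_compl)

lemma central_ex: "(\<lambda>j. n \<le> 2 * card (approvers n V j)) \<in> cen m n V"
proof -
  { fix j
    have "n \<le> 2 * card {i. i < n \<and> V i j = (n \<le> 2 * card (approvers n V j))}"
    proof (cases "n \<le> 2 * card (approvers n V j)")
      case True
      then show ?thesis by (simp add: approvers_def)
    next
      case False
      then have "n \<le> 2 * (n - card (approvers n V j))" by linarith
      then show ?thesis using False card_nonapprovers[of n V j] by simp
    qed }
  then show ?thesis unfolding cen_def central_def by auto
qed

lemma chd_formula:
  "chd m n V = (\<Sum>j<m. min (card (approvers n V j)) (n - card (approvers n V j)))"
proof -
  define u where "u = (SOME u. u \<in> cen m n V)"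
  have u: "u \<in> cen m n V" unfolding u_def using central_ex by (metis someI)
  have "chd m n V = (\<Sum>i<n. \<Sum>j<m. if V i j \<noteq> u j then 1 else 0::nat)"
    unfolding chd_def u_def[symmetric] ham_def by (simp add: card_count)
  also have "\<dots> = (\<Sum>j<m. \<Sum>i<n. if V i j \<noteq> u j then 1 else 0::nat)"
    by (rule sum.swap)
  also have "\<dots> = (\<Sum>j<m. min (card (approvers n V j)) (n - card (approvers n V j)))"
  proof (rule sum.cong, simp)
    fix j assume "j \<in> {..<m}"
    then have c: "n \<le> 2 * card {i. i < n \<and> V i j = u j}"
      using u unfolding cen_def central_def by auto
    have cc: "(\<Sum>i<n. if V i j \<noteq> u j then 1 else 0::nat) = n - card {i. i < n \<and> V i j = u j}"
      using count_compl[of "\<lambda>i. V i j = u j" n] by (simp add: card_count)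
    show "(\<Sum>i<n. if V i j \<noteq> u j then 1 else 0::nat) = min (card (approvers n V j)) (n - card (approvers n V j))"
    proof (cases "u j")
      case True
      then have "{i. i < n \<and> V i j = u j} = approvers n V j" by (auto simp: approvers_def)
      then show ?thesis using cc c approvers_le[of n V j] by simp
    next
      case False
      then have "{i. i < n \<and> V i j = u j} = {i. i < n \<and> \<not> V i j}" by auto
      then show ?thesis using cc c approvers_le[of n V j] card_nonapprovers[of n V j] by simp
    qed
  qed
  finally show ?thesis .
qed

lemma sum_approved: "(\<Sum>i<n. real (card (approved m V i))) = real (\<Sum>j<m. card (approvers n V j))"
proof -
  have "(\<Sum>i<n. card (approved m V i)) = (\<Sum>i<n. \<Sum>j<m. if V i j then 1 else 0::nat)"
    unfolding approved_def by (simp add: card_count)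
  also have "\<dots> = (\<Sum>j<m. \<Sum>i<n. if V i j then 1 else 0::nat)" by (rule sum.swap)
  also have "\<dots> = (\<Sum>j<m. card (approvers n V j))" by (simp add: card_approvers)
  finally show ?thesis by (metis of_nat_sum)
qed

lemma satr_formula: "satr m n V = real (\<Sum>j<m. card (approvers n V j)) / (real n * real m)"
  unfolding satr_def sum_approved ..

lemma cenA: "(\<exists>u\<in>cen m n V. \<forall>j<m. u j) \<longleftrightarrow> (\<forall>j<m. n \<le> 2 * card (approvers n V j))"
proof
  assume "\<exists>u\<in>cen m n V. \<forall>j<m. u j"
  then obtain u where u: "u \<in> cen m n V" "\<forall>j<m. u j" by blast
  show "\<forall>j<m. n \<le> 2 * card (approvers n V j)"
  proof (intro allI impI)
    fix j assume j: "j < m"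
    have "n \<le> 2 * card {i. i < n \<and> V i j = u j}" using u j unfolding cen_def central_def by blast
    moreover have "{i. i < n \<and> V i j = u j} = approvers n V j" using u j unfolding approvers_def by simp
    ultimately show "n \<le> 2 * card (approvers n V j)" by simp
  qed
next
  assume A: "\<forall>j<m. n \<le> 2 * card (approvers n V j)"
  have "\<And>j. {i. i < n \<and> V i j = True} = approvers n V j" unfolding approvers_def by simp
  then have "(\<lambda>_. True) \<in> cen m n V" unfolding cen_def central_def using A by simp
  then show "\<exists>u\<in>cen m n V. \<forall>j<m. u j" by (rule bexI[rotated]) simp
qed

lemma cenB: "(\<exists>u\<in>cen m n V. \<forall>j<m. \<not> u j) \<longleftrightarrow> (\<forall>j<m. n \<le> 2 * (n - card (approvers n V j)))"
proof
  assume "\<exists>u\<in>cen m n V. \<forall>j<m. \<not> u j"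
  then obtain u where u: "u \<in> cen m n V" "\<forall>j<m. \<not> u j" by blast
  show "\<forall>j<m. n \<le> 2 * (n - card (approvers n V j))"
  proof (intro allI impI)
    fix j assume "j < m"
    then have "n \<le> 2 * card {i. i < n \<and> V i j = u j}" "\<not> u j" using u unfolding cen_def central_def by auto
    then show "n \<le> 2 * (n - card (approvers n V j))" using card_nonapprovers[of n V j] by simp
  qed
next
  assume A: "\<forall>j<m. n \<le> 2 * (n - card (approvers n V j))"
  have "\<And>j. {i. i < n \<and> V i j = False} = {i. i < n \<and> \<not> V i j}" by simp
  then have "(\<lambda>_. False) \<in> cen m n V" unfolding cen_def central_def
    using A card_nonapprovers by simp
  then show "\<exists>u\<in>cen m n V. \<forall>j<m. \<not> u j" by (rule bexI[rotated]) simp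
qed

lemma exists_bounded: "(T::nat) \<le> m * k \<Longrightarrow> \<exists>b. (\<forall>j<m. b j \<le> k) \<and> (\<Sum>j<m. b j) = T"
proof (induction m arbitrary: T)
  case 0
  then show ?case by (intro exI[of _ "\<lambda>_. 0"]) simp
next
  case (Suc m)
  define t where "t = min T k"
  have "T - t \<le> m * k" using Suc.prems unfolding t_def by auto
  then obtain b where b: "\<forall>j<m. b j \<le> k" "(\<Sum>j<m. b j) = T - t" using Suc.IH by blast
  have s: "(\<Sum>j<m. (b(m := t)) j) = (\<Sum>j<m. b j)" by (rule sum.cong) auto
  show ?case
    by (intro exI[of _ "b(m := t)"]) (use b s t_def in \<open>auto simp: less_Suc_eq\<close>)
qed

definition mk :: "(nat \<Rightarrow> nat) \<Rightarrow> election" where "mk b = (\<lambda>i j. i < b j)"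

lemma mk_approvers: "b j \<le> n \<Longrightarrow> card (approvers n (mk b) j) = b j"
proof -
  assume "b j \<le> n"
  then have "approvers n (mk b) j = {..<b j}" unfolding approvers_def mk_def by auto
  then show ?thesis by simp
qed

theorem lemma2:
  fixes m n :: nat and \<alpha> :: real and E :: election
  assumes "m > 0" and "n > 0" and "0 \<le> \<alpha>" and "\<alpha> \<le> 1"
    and "satr m n E = \<alpha>"
  shows "(\<forall>E'. satr m n E' = \<alpha> \<longrightarrow> chd m n E' \<le> chd m n E) \<longleftrightarrow>
         ((\<exists>u\<in>cen m n E. \<forall>j<m. u j) \<or>
          (\<exists>u\<in>cen m n E. \<forall>j<m. \<not> u j) \<or>
          (\<forall>j<m. card (approvers n E j) \<in> {n div 2, (n + 1) div 2}))"
proof -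
  define a where "a = (\<lambda>j. card (approvers n E j))"
  define S where "S = (\<Sum>j<m. a j)"
  define fl where "fl = n div 2"
  have aln: "\<And>j. a j \<le> n" unfolding a_def by (rule approvers_le)
  have Sle: "S \<le> m * n" unfolding S_def using sum_mono[of "{..<m}" a "\<lambda>_. n"] aln by simp
  have satr_iff: "satr m n E' = \<alpha> \<longleftrightarrow> (\<Sum>j<m. card (approvers n E' j)) = S" for E'
  proof -
    have "satr m n E' = \<alpha> \<longleftrightarrow> real (\<Sum>j<m. card (approvers n E' j)) / (real n * real m) = real S / (real n * real m)"
      using assms(5) unfolding satr_formula S_def a_def by simp
    also have "\<dots> \<longleftrightarrow> real (\<Sum>j<m. card (approvers n E' j)) = real S"
      using assms(1,2) by (simp add: field_simps)
    finally show ?thesis by linarith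
  qed
  have chdE: "chd m n E = (\<Sum>j<m. min (a j) (n - a j))" unfolding a_def by (rule chd_formula)
  have gfl: "min x (n - x) \<le> fl" for x unfolding fl_def by linarith
  have sum_compl: "(\<Sum>j<m. n - c j) = m * n - (\<Sum>j<m. c j)" if "\<And>j. c j \<le> n" for c :: "nat \<Rightarrow> nat"
    using sum_subtractf_nat[of "{..<m}" c "\<lambda>_. n"] that by simp
  show ?thesis
  proof
    assume mx: "\<forall>E'. satr m n E' = \<alpha> \<longrightarrow> chd m n E' \<le> chd m n E"
    have mx': "chd m n (mk b) \<le> chd m n E" if "\<forall>j<m. b j \<le> n" "(\<Sum>j<m. b j) = S" for b
    proof -
      have "(\<Sum>j<m. card (approvers n (mk b) j)) = S"
        using that mk_approvers by (metis (no_types, lifting) lessThan_iff sum.cong)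
      then show ?thesis using mx satr_iff by blast
    qed
    have chdmk: "chd m n (mk b) = (\<Sum>j<m. min (b j) (n - b j))" if "\<forall>j<m. b j \<le> n" for b
      unfolding chd_formula using that mk_approvers by (intro sum.cong) auto
    show "((\<exists>u\<in>cen m n E. \<forall>j<m. u j) \<or>
          (\<exists>u\<in>cen m n E. \<forall>j<m. \<not> u j) \<or>
          (\<forall>j<m. card (approvers n E j) \<in> {n div 2, (n + 1) div 2}))"
    proof (rule ccontr)
      assume H: "\<not> ?thesis"
      then have nA: "\<exists>j<m. 2 * a j < n" and nB: "\<exists>j<m. 2 * (n - a j) < n"
        and nC: "\<exists>j<m. a j \<noteq> fl \<and> a j \<noteq> (n + 1) div 2"
        unfolding cenA cenB a_def fl_def by auto
      consider "S \<le> m * fl" | "m * (n - fl) \<le> S" | "m * fl < S" "S < m * (n - fl)" by linarith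
      then show False
      proof cases
        case 1
        then obtain b where b: "\<forall>j<m. b j \<le> fl" "(\<Sum>j<m. b j) = S"
          using exists_bounded by blast
        have bn: "\<forall>j<m. b j \<le> n" using b unfolding fl_def by auto
        have "chd m n (mk b) = (\<Sum>j<m. b j)" unfolding chdmk[OF bn]
          using b(1) unfolding fl_def by (intro sum.cong) auto
        moreover have "chd m n E < S" unfolding chdE S_def
        proof (rule sum_strict_mono_ex1)
          obtain j where "j < m" "2 * (n - a j) < n" using nB by blast
          then show "\<exists>x\<in>{..<m}. min (a x) (n - a x) < a x" by (intro bexI[of _ j]) auto
        qed auto
        ultimately show False using mx'[OF bn b(2)] b(2) by linarith
      next
        case 2
        have "m * n - S \<le> m * fl" using 2 Sle by (simp add: diff_mult_distrib2)
        then obtain c where c: "\<forall>j<m. c j \<le> fl" "(\<Sum>j<m. c j) = m * n - S"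
          using exists_bounded by blast
        define c' where "c' = (\<lambda>j. if j < m then c j else 0)"
        have c'n: "\<And>j. c' j \<le> n" unfolding c'_def fl_def using c(1) fl_def by auto
        have c's: "(\<Sum>j<m. c' j) = m * n - S" using c(2) unfolding c'_def by simp
        define b where "b = (\<lambda>j. n - c' j)"
        have bn: "\<forall>j<m. b j \<le> n" unfolding b_def by auto
        have bs: "(\<Sum>j<m. b j) = S" unfolding b_def using sum_compl[OF c'n] c's Sle by simp
        have "chd m n (mk b) = (\<Sum>j<m. c' j)" unfolding chdmk[OF bn]
          using c(1) c'n unfolding fl_def b_def c'_def by (intro sum.cong) auto
        moreover have "chd m n E < (\<Sum>j<m. n - a j)" unfolding chdE
        proof (rule sum_strict_mono_ex1)
          obtain j where "j < m" "2 * a j < n" using nA by blast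
          then show "\<exists>x\<in>{..<m}. min (a x) (n - a x) < n - a x" by (intro bexI[of _ j]) auto
        qed auto
        moreover have "(\<Sum>j<m. n - a j) = m * n - S" unfolding S_def using sum_compl aln by blast
        ultimately show False using mx'[OF bn bs] c's by linarith
      next
        case 3
        then have fl_lt: "fl < n - fl" by (metis mult_less_cancel1 order_less_trans)
        then have odd: "n = 2 * fl + 1" unfolding fl_def by linarith
        have "S - m * fl \<le> m * 1" using 3 odd by (simp add: diff_mult_distrib2)
        then obtain d where d: "\<forall>j<m. d j \<le> 1" "(\<Sum>j<m. d j) = S - m * fl"
          using exists_bounded by blast
        define b where "b = (\<lambda>j. fl + d j)"
        have bn: "\<forall>j<m. b j \<le> n" unfolding b_def using d(1) odd by auto
        have bs: "(\<Sum>j<m. b j) = S" unfolding b_def using d(2) 3 by (simp add: sum.distrib)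
        have "chd m n (mk b) = (\<Sum>j<m. fl)" unfolding chdmk[OF bn]
        proof (intro sum.cong refl)
          fix j assume "j \<in> {..<m}"
          then have "d j = 0 \<or> d j = 1" using d(1) by fastforce
          then show "min (b j) (n - b j) = fl" unfolding b_def using odd by auto
        qed
        moreover have "chd m n E < (\<Sum>j<m. fl)" unfolding chdE
        proof (rule sum_strict_mono_ex1)
          show "\<forall>x\<in>{..<m}. min (a x) (n - a x) \<le> fl" using gfl by blast
          obtain j where j: "j < m" "a j \<noteq> fl" "a j \<noteq> (n + 1) div 2" using nC by blast
          then have "min (a j) (n - a j) < fl" using gfl[of "a j"] odd aln[of j] by linarith
          then show "\<exists>x\<in>{..<m}. min (a x) (n - a x) < fl" using j by blast
        qed simp
        ultimately show False using mx'[OF bn bs] by linarith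
      qed
    qed
  next
    assume H: "((\<exists>u\<in>cen m n E. \<forall>j<m. u j) \<or>
          (\<exists>u\<in>cen m n E. \<forall>j<m. \<not> u j) \<or>
          (\<forall>j<m. card (approvers n E j) \<in> {n div 2, (n + 1) div 2}))"
    show "\<forall>E'. satr m n E' = \<alpha> \<longrightarrow> chd m n E' \<le> chd m n E"
    proof (intro allI impI)
      fix E' assume "satr m n E' = \<alpha>"
      then have S': "(\<Sum>j<m. card (approvers n E' j)) = S" using satr_iff by blast
      define a' where "a' = (\<lambda>j. card (approvers n E' j))"
      have a'n: "\<And>j. a' j \<le> n" unfolding a'_def by (rule approvers_le)
      have chdE': "chd m n E' = (\<Sum>j<m. min (a' j) (n - a' j))" unfolding a'_def by (rule chd_formula)
      from H consider "\<forall>j<m. n \<le> 2 * a j" | "\<forall>j<m. n \<le> 2 * (n - a j)" | "\<forall>j<m. a j \<in> {fl, (n + 1) div 2}"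
        unfolding cenA cenB a_def fl_def by blast
      then show "chd m n E' \<le> chd m n E"
      proof cases
        case 1
        have "chd m n E = (\<Sum>j<m. n - a j)" unfolding chdE using 1 by (intro sum.cong) auto
        also have "\<dots> = m * n - S" unfolding S_def using sum_compl aln by blast
        also have "\<dots> = (\<Sum>j<m. n - a' j)" using sum_compl[OF a'n] S' unfolding a'_def by simp
        also have "\<dots> \<ge> chd m n E'" unfolding chdE' by (rule sum_mono) simp
        finally show ?thesis .
      next
        case 2
        have "chd m n E = S" unfolding chdE S_def
        proof (intro sum.cong refl)
          fix j assume "j \<in> {..<m}"
          then have "n \<le> 2 * (n - a j)" using 2 by auto
          then show "min (a j) (n - a j) = a j" using aln[of j] by linarith
        qed
        moreover have "chd m n E' \<le> (\<Sum>j<m. a' j)" unfolding chdE' by (rule sum_mono) simp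
        ultimately show ?thesis using S' unfolding a'_def by simp
      next
        case 3
        have "chd m n E = (\<Sum>j<m. fl)" unfolding chdE
        proof (intro sum.cong refl)
          fix j assume "j \<in> {..<m}"
          then show "min (a j) (n - a j) = fl" using 3 unfolding fl_def by auto
        qed
        moreover have "chd m n E' \<le> (\<Sum>j<m. fl)" unfolding chdE' by (rule sum_mono) (rule gfl)
        ultimately show ?thesis by simp
      qed
    qed
  qed
qed

end
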